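(* For integers $2\leq k\leq n$, $$D(n,k)=(k-1)\, D(n-1,k) + k\, D(n-1,k-1).$$ In addition, $D(n,n)=n!$, $D(n,1)=0$ for $n>1$, and $D(n,k)=0$ for $k>n$.
   Context: A walk of length $n-1$ in a graph is a sequence of $n$ vertices $v_1,\dots,v_n$ such that $\{v_i,v_{i+1}\}$ is an edge for each $i$. $D(n,k)$ denotes the number of walks of length $n-1$ in the complete graph $K_k$ on $k$ labelled vertices (no self-loops) that visit every vertex of $K_k$ at least once. *)

theory Defs
  imports Main
begin

text \<open>Walks of length n-1 in the complete graph K_k on vertex set {0..<k}:
  lists of n vertices from {0..<k} with consecutive vertices adjacent (i.e. distinct,
  since K_k has no self-loops), visiting every vertex at least once.\<close>

definition surj_walks :: "nat \<Rightarrow> nat \<Rightarrow> nat list set" where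
  "surj_walks n k = {w. length w = n \<and> set w = {0..<k}
      \<and> (\<forall>i. Suc i < n \<longrightarrow> w ! i \<noteq> w ! Suc i)}"

definition D :: "nat \<Rightarrow> nat \<Rightarrow> nat" where
  "D n k = card (surj_walks n k)"

end

theory Submission
  imports Defs
begin

definition adj :: "nat list \<Rightarrow> bool" where
  "adj w = (\<forall>i. Suc i < length w \<longrightarrow> w ! i \<noteq> w ! Suc i)"

definition W :: "nat \<Rightarrow> nat set \<Rightarrow> nat list set" where
  "W n S = {w. length w = n \<and> set w = S \<and> adj w}"

lemma sw_W: "surj_walks n k = W n {0..<k}"
  unfolding surj_walks_def W_def adj_def by auto

lemma adj_snoc: "adj (v @ [x]) \<longleftrightarrow> adj v \<and> (v \<noteq> [] \<longrightarrow> last v \<noteq> x)"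
proof
  assume a: "adj (v @ [x])"
  have "adj v" unfolding adj_def
  proof (intro allI impI)
    fix i assume "Suc i < length v"
    with a[unfolded adj_def, rule_format, of i] show "v ! i \<noteq> v ! Suc i"
      by (simp add: nth_append)
  qed
  moreover have "v \<noteq> [] \<longrightarrow> last v \<noteq> x"
  proof
    assume "v \<noteq> []"
    with a[unfolded adj_def, rule_format, of "length v - 1"] show "last v \<noteq> x"
      by (simp add: nth_append last_conv_nth)
  qed
  ultimately show "adj v \<and> (v \<noteq> [] \<longrightarrow> last v \<noteq> x)" by blast
next
  assume a: "adj v \<and> (v \<noteq> [] \<longrightarrow> last v \<noteq> x)"
  show "adj (v @ [x])" unfolding adj_def
  proof (intro allI impI)
    fix i assume i: "Suc i < length (v @ [x])"
    show "(v @ [x]) ! i \<noteq> (v @ [x]) ! Suc i"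
    proof (cases "Suc i < length v")
      case True
      then show ?thesis using a unfolding adj_def by (simp add: nth_append)
    next
      case False
      then have "i = length v - 1" "v \<noteq> []" using i by auto
      then show ?thesis using a by (simp add: nth_append last_conv_nth)
    qed
  qed
qed

lemma W_finite: "finite S \<Longrightarrow> finite (W n S)"
proof -
  assume f: "finite S"
  have "W n S \<subseteq> {w. set w \<subseteq> S \<and> length w = n}" unfolding W_def by auto
  moreover have "finite {w. set w \<subseteq> S \<and> length w = n}"
    using finite_lists_length_eq[OF f] by simp
  ultimately show ?thesis by (rule finite_subset)
qed

lemma W_card: assumes f: "finite S" shows "card (W n S) = D n (card S)"
proof -
  obtain f where bf: "bij_betw f S {0..<card S}"
    using ex_bij_betw_finite_nat[OF f] by blast
  have inj: "inj_on f S" using bf by (simp add: bij_betw_def)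
  have im: "f ` S = {0..<card S}" using bf by (simp add: bij_betw_def)
  have "inj_on (map f) (W n S)"
  proof (rule inj_onI)
    fix u v assume "u \<in> W n S" "v \<in> W n S" "map f u = map f v"
    then have "set u \<union> set v = S" unfolding W_def by auto
    then show "u = v" using inj_on_map_eq_map[of f u v] inj \<open>map f u = map f v\<close> by simp
  qed
  moreover have "map f ` W n S = W n {0..<card S}"
  proof
    show "map f ` W n S \<subseteq> W n {0..<card S}"
    proof
      fix w assume "w \<in> map f ` W n S"
      then obtain u where u: "u \<in> W n S" "w = map f u" by blast
      have "adj w" using u inj unfolding W_def adj_def
        by (auto simp: inj_on_eq_iff)
      then show "w \<in> W n {0..<card S}" using u im unfolding W_def by auto
    qed
  next
    show "W n {0..<card S} \<subseteq> map f ` W n S"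
    proof
      fix w assume w: "w \<in> W n {0..<card S}"
      define g where "g = inv_into S f"
      have gs: "\<And>y. y \<in> {0..<card S} \<Longrightarrow> f (g y) = y \<and> g y \<in> S"
        using bf unfolding g_def
        by (metis bij_betw_inv_into_right bij_betw_imp_surj_on inv_into_into)
      have gi: "\<And>y z. y \<in> {0..<card S} \<Longrightarrow> z \<in> {0..<card S} \<Longrightarrow> g y = g z \<Longrightarrow> y = z"
        using gs by metis
      let ?u = "map g w"
      have e: "map f ?u = w" using w gs unfolding W_def by (auto intro: map_idI)
      have "set ?u = S"
      proof
        show "set ?u \<subseteq> S" using w gs unfolding W_def by auto
        show "S \<subseteq> set ?u"
        proof
          fix s assume "s \<in> S"
          then have "f s \<in> set w" using im w unfolding W_def by auto
          moreover have "g (f s) = s" unfolding g_def using inj \<open>s \<in> S\<close> by simp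
          ultimately show "s \<in> set ?u" by force
        qed
      qed
      moreover have "adj ?u" unfolding adj_def
      proof (intro allI impI)
        fix i assume i: "Suc i < length ?u"
        then have l: "Suc i < length w" by simp
        then have "w ! i \<in> {0..<card S}" "w ! Suc i \<in> {0..<card S}" "w ! i \<noteq> w ! Suc i"
          using w unfolding W_def adj_def by (auto dest: nth_mem[of _ w] simp del: atLeastLessThan_iff)
        then have "g (w ! i) \<noteq> g (w ! Suc i)" using gi by blast
        then show "?u ! i \<noteq> ?u ! Suc i" using l by simp
      qed
      ultimately have "?u \<in> W n S" using w unfolding W_def by auto
      then show "w \<in> map f ` W n S" using e by force
    qed
  qed
  ultimately have "card (W n S) = card (W n {0..<card S})"
    using card_image by fastforce
  then show ?thesis by (simp add: D_def sw_W)
qed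

lemma swap_mem: "(v, x) \<in> prod.swap ` Sigma S B \<longleftrightarrow> x \<in> S \<and> v \<in> B x"
  by (auto simp: image_iff)

lemma decomp:
  assumes "1 \<le> m"
  shows "W (Suc m) S = (\<lambda>(v,x). v @ [x]) ` (Sigma (W m S) (\<lambda>v. S - {last v}) \<union> prod.swap ` Sigma S (\<lambda>x. W m (S - {x})))"
proof
  show "W (Suc m) S \<subseteq> (\<lambda>(v,x). v @ [x]) ` (Sigma (W m S) (\<lambda>v. S - {last v}) \<union> prod.swap ` Sigma S (\<lambda>x. W m (S - {x})))"
  proof
    fix w assume w: "w \<in> W (Suc m) S"
    then have "w \<noteq> []" unfolding W_def by auto
    then obtain v x where vx: "w = v @ [x]" by (metis rev_exhaust)
    have lv: "length v = m" "v \<noteq> []" using w vx assms unfolding W_def by auto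
    have av: "adj v" "last v \<noteq> x" using w vx lv(2) adj_snoc[of v x] unfolding W_def by auto
    have sw: "insert x (set v) = S" using w vx unfolding W_def by simp
    have mem: "(v,x) \<in> Sigma (W m S) (\<lambda>v. S - {last v}) \<union> prod.swap ` Sigma S (\<lambda>x. W m (S - {x}))"
    proof (cases "x \<in> set v")
      case True
      then have "set v = S" using sw by blast
      then have "(v,x) \<in> Sigma (W m S) (\<lambda>v. S - {last v})"
        using lv av sw unfolding W_def by blast
      then show ?thesis by blast
    next
      case False
      then have "set v = S - {x}" using sw by blast
      then have "v \<in> W m (S - {x})" "x \<in> S" using lv av sw unfolding W_def by auto
      then have "(v,x) \<in> prod.swap ` Sigma S (\<lambda>x. W m (S - {x}))"
        using swap_mem by metis
      then show ?thesis by blast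
    qed
    have "w = (\<lambda>(v,x). v @ [x]) (v,x)" using vx by simp
    then show "w \<in> (\<lambda>(v,x). v @ [x]) ` (Sigma (W m S) (\<lambda>v. S - {last v}) \<union> prod.swap ` Sigma S (\<lambda>x. W m (S - {x})))"
      using mem by (rule image_eqI)
  qed
next
  show "(\<lambda>(v,x). v @ [x]) ` (Sigma (W m S) (\<lambda>v. S - {last v}) \<union> prod.swap ` Sigma S (\<lambda>x. W m (S - {x}))) \<subseteq> W (Suc m) S"
  proof
    fix w assume "w \<in> (\<lambda>(v,x). v @ [x]) ` (Sigma (W m S) (\<lambda>v. S - {last v}) \<union> prod.swap ` Sigma S (\<lambda>x. W m (S - {x})))"
    then obtain p where p: "p \<in> Sigma (W m S) (\<lambda>v. S - {last v}) \<union> prod.swap ` Sigma S (\<lambda>x. W m (S - {x}))"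
      and wp: "w = (\<lambda>(v,x). v @ [x]) p" by blast
    obtain v x where pv: "p = (v,x)" by (cases p)
    have vx: "w = v @ [x]" using wp pv by simp
    have c: "(v,x) \<in> Sigma (W m S) (\<lambda>v. S - {last v}) \<or> (x \<in> S \<and> v \<in> W m (S - {x}))"
    proof -
      have "(v,x) \<in> Sigma (W m S) (\<lambda>v. S - {last v}) \<union> prod.swap ` Sigma S (\<lambda>x. W m (S - {x}))"
        using p pv by simp
      then show ?thesis unfolding Un_iff swap_mem .
    qed
    from c show "w \<in> W (Suc m) S"
    proof
      assume h: "(v,x) \<in> Sigma (W m S) (\<lambda>v. S - {last v})"
      then have "length v = m" "set v = S" "adj v" "x \<in> S" "x \<noteq> last v" unfolding W_def by auto
      moreover have "v \<noteq> []" using \<open>length v = m\<close> assms by auto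
      ultimately show ?thesis using vx adj_snoc[of v x] unfolding W_def by auto
    next
      assume h: "x \<in> S \<and> v \<in> W m (S - {x})"
      then have "length v = m" "set v = S - {x}" "adj v" "x \<in> S" unfolding W_def by auto
      moreover have ne: "v \<noteq> []" using \<open>length v = m\<close> assms by auto
      moreover have "last v \<noteq> x" using ne last_in_set[OF ne] \<open>set v = S - {x}\<close> by auto
      ultimately show ?thesis using vx adj_snoc[of v x] unfolding W_def by auto
    qed
  qed
qed

lemma recur:
  assumes "1 \<le> m" "1 \<le> k"
  shows "D (Suc m) k = (k - 1) * D m k + k * D m (k - 1)"
proof -
  let ?S = "{0..<k}"
  let ?A = "Sigma (W m ?S) (\<lambda>v. ?S - {last v})"
  let ?B = "prod.swap ` Sigma ?S (\<lambda>x. W m (?S - {x}))"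
  have fA: "finite ?A" by (intro finite_SigmaI W_finite) auto
  have fB: "finite ?B" by (intro finite_imageI finite_SigmaI W_finite) auto
  have dis: "?A \<inter> ?B = {}"
  proof -
    { fix p assume "p \<in> ?A" "p \<in> ?B"
      moreover obtain v x where "p = (v,x)" by (cases p)
      ultimately have "set v = ?S" "x \<in> ?S" "set v = ?S - {x}" unfolding W_def by auto
      then have False by blast }
    then show ?thesis by blast
  qed
  have inj: "inj_on (\<lambda>(v,x). v @ [x]) (?A \<union> ?B)"
    by (rule inj_onI) auto
  have hA: "card ?A = (k - 1) * D m k"
  proof -
    have "card ?A = (\<Sum>v\<in>W m ?S. card (?S - {last v}))"
      by (rule card_SigmaI) (auto intro!: W_finite)
    also have "\<dots> = (\<Sum>v\<in>W m ?S. k - 1)"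
    proof (rule sum.cong)
      fix v assume "v \<in> W m ?S"
      then have "v \<noteq> []" "set v = ?S" using assms unfolding W_def by auto
      then have "last v \<in> ?S" using last_in_set by metis
      then show "card (?S - {last v}) = k - 1" by simp
    qed simp
    also have "\<dots> = (k - 1) * D m k" by (simp add: D_def sw_W)
    finally show ?thesis .
  qed
  have hB: "card ?B = k * D m (k - 1)"
  proof -
    have "card ?B = card (Sigma ?S (\<lambda>x. W m (?S - {x})))"
      by (rule card_image) (simp add: swap_inj_on)
    also have "\<dots> = (\<Sum>x\<in>?S. card (W m (?S - {x})))"
      by (rule card_SigmaI) (auto intro!: W_finite)
    also have "\<dots> = (\<Sum>x\<in>?S. D m (k - 1))"
      by (rule sum.cong) (simp_all add: W_card)
    also have "\<dots> = k * D m (k - 1)" by simp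
    finally show ?thesis .
  qed
  have "D (Suc m) k = card (W (Suc m) ?S)" by (simp add: D_def sw_W)
  also have "\<dots> = card (?A \<union> ?B)" unfolding decomp[OF assms(1)] by (rule card_image[OF inj])
  also have "\<dots> = card ?A + card ?B" using card_Un_disjoint[OF fA fB dis] .
  also have "\<dots> = (k - 1) * D m k + k * D m (k - 1)" using hA hB by simp
  finally show ?thesis .
qed

lemma big0: "k > n \<Longrightarrow> D n k = 0"
proof -
  assume kn: "k > n"
  have "surj_walks n k = {}"
  proof (rule ccontr)
    assume "surj_walks n k \<noteq> {}"
    then obtain w where "w \<in> surj_walks n k" by blast
    then have "length w = n" "set w = {0..<k}" unfolding surj_walks_def by auto
    then have "k \<le> n" using card_length[of w] by simp
    then show False using kn by simp
  qed
  then show ?thesis by (simp add: D_def)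
qed

lemma one0: "n > 1 \<Longrightarrow> D n 1 = 0"
proof -
  assume n: "n > 1"
  have "surj_walks n 1 = {}"
  proof (rule ccontr)
    assume "surj_walks n 1 \<noteq> {}"
    then obtain w where w: "w \<in> surj_walks n 1" by blast
    have l: "length w = n" "set w = {0}" and ad: "\<forall>i. Suc i < n \<longrightarrow> w ! i \<noteq> w ! Suc i"
      using w unfolding surj_walks_def by auto
    have "w ! 0 \<in> set w" "w ! Suc 0 \<in> set w" using n l(1) by (simp_all add: nth_mem)
    then have "w ! 0 = w ! Suc 0" using l(2) by simp
    moreover have "w ! 0 \<noteq> w ! Suc 0" using ad n by simp
    ultimately show False by simp
  qed
  then show ?thesis by (simp add: D_def)
qed

lemma D00: "D 0 0 = 1"
proof -
  have "surj_walks 0 0 = {[]}" unfolding surj_walks_def by auto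
  then show ?thesis by (simp add: D_def)
qed

lemma D11: "D 1 1 = 1"
proof -
  have "surj_walks 1 1 = {[0]}"
  proof
    show "surj_walks 1 1 \<subseteq> {[0]}"
    proof
      fix w assume w: "w \<in> surj_walks 1 1"
      then have "length w = 1" "set w = {0}" unfolding surj_walks_def by auto
      then obtain a where "w = [a]" by (metis length_0_conv length_Suc_conv One_nat_def)
      then show "w \<in> {[0]}" using \<open>set w = {0}\<close> by simp
    qed
    show "{[0]} \<subseteq> surj_walks 1 1" unfolding surj_walks_def by simp
  qed
  then show ?thesis by (simp add: D_def)
qed

lemma Dnn: "D n n = fact n"
proof (induction n)
  case 0 then show ?case by (simp add: D00)
next
  case (Suc m)
  show ?case
  proof (cases "m = 0")
    case True then show ?thesis using D11 by simp
  next
    case False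
    then have "D (Suc m) (Suc m) = m * D m (Suc m) + Suc m * D m m"
      using recur[of m "Suc m"] by simp
    then show ?thesis using big0[of m "Suc m"] Suc by (simp add: fact_Suc)
  qed
qed

theorem mainTheorem3:
  shows "(\<forall>n k. 2 \<le> k \<and> k \<le> n \<longrightarrow> D n k = (k - 1) * D (n - 1) k + k * D (n - 1) (k - 1))
       \<and> (\<forall>n. D n n = fact n)
       \<and> (\<forall>n. n > 1 \<longrightarrow> D n 1 = 0)
       \<and> (\<forall>n k. k > n \<longrightarrow> D n k = 0)"
proof (intro conjI allI impI)
  fix n k :: nat assume a: "2 \<le> k \<and> k \<le> n"
  define m where "m = n - 1"
  have m: "n = Suc m" "1 \<le> m" using a unfolding m_def by auto
  show "D n k = (k - 1) * D (n - 1) k + k * D (n - 1) (k - 1)"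
    using recur[of m k] m a by simp
qed (simp_all add: Dnn big0 one0[unfolded One_nat_def])

end
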